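(* Assume the quantities $\overline{P}^c_e(t)$ and $\overline{P}^d_e(t)$ defined in the context are positive for all $t=1,\ldots,T$ (e.g. if $\underline{S}<s_0<\overline{S}$). Then for every $t\in\{1,\ldots,T\}$ and every $\overline{\tau}\in\{0,\ldots,T-t\}$ the linear inequalities $$\sum_{\tau=0}^{\overline{\tau}}\Big(p^c_{t+\tau}+\overline{\rho}^c(t,\tau,\overline{\tau})\,p^d_{t+\tau}\Big)\le\sum_{\tau=0}^{\overline{\tau}}c(t,\tau),\qquad(\mathrm{VIc})$$ $$\sum_{\tau=0}^{\overline{\tau}}\Big(p^d_{t+\tau}+\overline{\rho}^d(t,\tau,\overline{\tau})\,p^c_{t+\tau}\Big)\le\sum_{\tau=0}^{\overline{\tau}}d(t,\tau)\qquad(\mathrm{VId})$$ are satisfied by every $(p^d,p^c,s)\in\mathcal{P}$.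
   Context: Let $T\ge1$ be an integer, $\Delta>0$, $\eta_c,\eta_d\in(0,1]$, $\overline{P}^d,\overline{P}^c>0$, $\underline{S}<\overline{S}$, and a given initial state of charge $s_0\in[\underline{S},\overline{S}]$. The storage feasible set $\mathcal{P}$ is the set of $(p^d,p^c,s)\in\mathbb{R}^T_{\ge0}\times\mathbb{R}^T_{\ge0}\times\mathbb{R}^T_{\ge0}$ with $p^d_t\le\overline{P}^d$, $p^c_t\le\overline{P}^c$, $\underline{S}\le s_t\le\overline{S}$, $s_t=s_{t-1}+\Delta(\eta_cp^c_t-p^d_t/\eta_d)$ for $t=1,\ldots,T$, and $p^d_tp^c_t=0$ for all $t$. Let $\overline{P}^d_e=\min\{\overline{P}^d,\eta_d(\overline{S}-\underline{S})/\Delta\}$, $\overline{P}^c_e=\min\{\overline{P}^c,(\overline{S}-\underline{S})/(\Delta\eta_c)\}$, and $[x]^+=\max\{x,0\}$. Set $\underline{s}_0(0)=\overline{s}_0(0)=s_0$ and for $t=1,\ldots,T-1$: $\underline{s}_0(t)=\max\{\underline{s}_0(t-1)-\Delta\overline{P}^d_e/\eta_d,\ \underline{S}\}$, $\overline{s}_0(t)=\min\{\overline{s}_0(t-1)+\Delta\eta_c\overline{P}^c_e,\ \overline{S}\}$. For $t=1,\ldots,T$, $\overline{\tau}=0,\ldots,T-t$: $c(t,\overline{\tau})=\min\{\overline{P}^c_e,\ [(\overline{S}-\underline{s}_0(t-1))/(\Delta\eta_c)-\overline{\tau}\,\overline{P}^c_e]^+\}$, $d(t,\overline{\tau})=\min\{\overline{P}^d_e,\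 [(\overline{s}_0(t-1)-\underline{S})\eta_d/\Delta-\overline{\tau}\,\overline{P}^d_e]^+\}$. For $\tau=0,\ldots,T-2$: $\overline{c}(\tau)=\min\{\overline{P}^c_e,[(\overline{S}-\underline{S})/(\Delta\eta_c)-\tau\overline{P}^c_e]^+\}$, $\overline{d}(\tau)=\min\{\overline{P}^d_e,[(\overline{S}-\underline{S})\eta_d/\Delta-\tau\overline{P}^d_e]^+\}$. For $t=1,\ldots,T$: $\overline{P}^c_e(t)=c(t,0)$, $\overline{P}^d_e(t)=d(t,0)$. For $t=1,\ldots,T$, $\overline{\tau}=0,\ldots,T-t$, $\tau=0,\ldots,\overline{\tau}$: $\rho^c(t,\tau,\overline{\tau})=\max\{-\overline{P}^d_e(t+\tau)/(\eta_d\eta_c),\ \sum_{j=\tau}^{\overline{\tau}}c(t,j)-\sum_{j=0}^{\overline{\tau}-\tau-1}\overline{c}(j)\}$, $\rho^d(t,\tau,\overline{\tau})=\max\{-\eta_d\eta_c\overline{P}^c_e(t+\tau),\ \sum_{j=\tau}^{\overline{\tau}}d(t,j)-\sum_{j=0}^{\overline{\tau}-\tau-1}\overline{d}(j)\}$ (empty sums are $0$); $\overline{\rho}^c(t,\tau,\overline{\tau})=-1/(\eta_d\eta_c)$ if $\rho^c(t,\tau,\overline{\tau})\le0$ and $=\rho^c(t,\tau,\overline{\tau})/\overline{P}^d_e(t+\tau)$ otherwise; $\overline{\rho}^d(t,\tau,\overline{\tau})=-\eta_d\eta_c$ if $\rho^d(t,\tau,\overline{\tau})\le0$ and $=\rho^d(t,\tau,\overline{\tau})/\overline{P}^c_e(t+\tau)$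 otherwise. *)

theory Defs
  imports Complex_Main
begin

text \<open>Parameters: Dt (time step Delta), ec (eta_c), ed (eta_d), Pd, Pc (power limits),
  Smin, Smax (state-of-charge limits), s0 (initial state of charge).\<close>

definition Pde :: "real \<Rightarrow> real \<Rightarrow> real \<Rightarrow> real \<Rightarrow> real \<Rightarrow> real" where
  "Pde Dt ed Pd Smin Smax = min Pd (ed * (Smax - Smin) / Dt)"

definition Pce :: "real \<Rightarrow> real \<Rightarrow> real \<Rightarrow> real \<Rightarrow> real \<Rightarrow> real" where
  "Pce Dt ec Pc Smin Smax = min Pc ((Smax - Smin) / (Dt * ec))"

definition pos :: "real \<Rightarrow> real" where
  "pos x = max x 0"

fun slow :: "real \<Rightarrow> real \<Rightarrow> real \<Rightarrow> real \<Rightarrow> real \<Rightarrow> real \<Rightarrow> nat \<Rightarrow> real" where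
  "slow Dt ed Pd Smin Smax s0 0 = s0"
| "slow Dt ed Pd Smin Smax s0 (Suc t) =
     max (slow Dt ed Pd Smin Smax s0 t - Dt * Pde Dt ed Pd Smin Smax / ed) Smin"

fun shigh :: "real \<Rightarrow> real \<Rightarrow> real \<Rightarrow> real \<Rightarrow> real \<Rightarrow> real \<Rightarrow> nat \<Rightarrow> real" where
  "shigh Dt ec Pc Smin Smax s0 0 = s0"
| "shigh Dt ec Pc Smin Smax s0 (Suc t) =
     min (shigh Dt ec Pc Smin Smax s0 t + Dt * ec * Pce Dt ec Pc Smin Smax) Smax"

definition cfun :: "real \<Rightarrow> real \<Rightarrow> real \<Rightarrow> real \<Rightarrow> real \<Rightarrow> real \<Rightarrow> real \<Rightarrow> real \<Rightarrow> nat \<Rightarrow> nat \<Rightarrow> real" where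
  "cfun Dt ec ed Pd Pc Smin Smax s0 t tb =
     min (Pce Dt ec Pc Smin Smax)
         (pos ((Smax - slow Dt ed Pd Smin Smax s0 (t - 1)) / (Dt * ec) - real tb * Pce Dt ec Pc Smin Smax))"

definition dfun :: "real \<Rightarrow> real \<Rightarrow> real \<Rightarrow> real \<Rightarrow> real \<Rightarrow> real \<Rightarrow> real \<Rightarrow> real \<Rightarrow> nat \<Rightarrow> nat \<Rightarrow> real" where
  "dfun Dt ec ed Pd Pc Smin Smax s0 t tb =
     min (Pde Dt ed Pd Smin Smax)
         (pos ((shigh Dt ec Pc Smin Smax s0 (t - 1) - Smin) * ed / Dt - real tb * Pde Dt ed Pd Smin Smax))"

definition cbar :: "real \<Rightarrow> real \<Rightarrow> real \<Rightarrow> real \<Rightarrow> real \<Rightarrow> nat \<Rightarrow> real" where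
  "cbar Dt ec Pc Smin Smax k =
     min (Pce Dt ec Pc Smin Smax) (pos ((Smax - Smin) / (Dt * ec) - real k * Pce Dt ec Pc Smin Smax))"

definition dbar :: "real \<Rightarrow> real \<Rightarrow> real \<Rightarrow> real \<Rightarrow> real \<Rightarrow> nat \<Rightarrow> real" where
  "dbar Dt ed Pd Smin Smax k =
     min (Pde Dt ed Pd Smin Smax) (pos ((Smax - Smin) * ed / Dt - real k * Pde Dt ed Pd Smin Smax))"

definition PceT :: "real \<Rightarrow> real \<Rightarrow> real \<Rightarrow> real \<Rightarrow> real \<Rightarrow> real \<Rightarrow> real \<Rightarrow> real \<Rightarrow> nat \<Rightarrow> real" where
  "PceT Dt ec ed Pd Pc Smin Smax s0 t = cfun Dt ec ed Pd Pc Smin Smax s0 t 0"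

definition PdeT :: "real \<Rightarrow> real \<Rightarrow> real \<Rightarrow> real \<Rightarrow> real \<Rightarrow> real \<Rightarrow> real \<Rightarrow> real \<Rightarrow> nat \<Rightarrow> real" where
  "PdeT Dt ec ed Pd Pc Smin Smax s0 t = dfun Dt ec ed Pd Pc Smin Smax s0 t 0"

definition rhoc :: "real \<Rightarrow> real \<Rightarrow> real \<Rightarrow> real \<Rightarrow> real \<Rightarrow> real \<Rightarrow> real \<Rightarrow> real \<Rightarrow> nat \<Rightarrow> nat \<Rightarrow> nat \<Rightarrow> real" where
  "rhoc Dt ec ed Pd Pc Smin Smax s0 t tau tb =
     max (- PdeT Dt ec ed Pd Pc Smin Smax s0 (t + tau) / (ed * ec))
         ((\<Sum>j\<in>{tau..tb}. cfun Dt ec ed Pd Pc Smin Smax s0 t j)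
          - (\<Sum>j<tb - tau. cbar Dt ec Pc Smin Smax j))"

definition rhod :: "real \<Rightarrow> real \<Rightarrow> real \<Rightarrow> real \<Rightarrow> real \<Rightarrow> real \<Rightarrow> real \<Rightarrow> real \<Rightarrow> nat \<Rightarrow> nat \<Rightarrow> nat \<Rightarrow> real" where
  "rhod Dt ec ed Pd Pc Smin Smax s0 t tau tb =
     max (- ed * ec * PceT Dt ec ed Pd Pc Smin Smax s0 (t + tau))
         ((\<Sum>j\<in>{tau..tb}. dfun Dt ec ed Pd Pc Smin Smax s0 t j)
          - (\<Sum>j<tb - tau. dbar Dt ed Pd Smin Smax j))"

definition rhocbar :: "real \<Rightarrow> real \<Rightarrow> real \<Rightarrow> real \<Rightarrow> real \<Rightarrow> real \<Rightarrow> real \<Rightarrow> real \<Rightarrow> nat \<Rightarrow> nat \<Rightarrow> nat \<Rightarrow> real" where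
  "rhocbar Dt ec ed Pd Pc Smin Smax s0 t tau tb =
     (if rhoc Dt ec ed Pd Pc Smin Smax s0 t tau tb \<le> 0 then - 1 / (ed * ec)
      else rhoc Dt ec ed Pd Pc Smin Smax s0 t tau tb / PdeT Dt ec ed Pd Pc Smin Smax s0 (t + tau))"

definition rhodbar :: "real \<Rightarrow> real \<Rightarrow> real \<Rightarrow> real \<Rightarrow> real \<Rightarrow> real \<Rightarrow> real \<Rightarrow> real \<Rightarrow> nat \<Rightarrow> nat \<Rightarrow> nat \<Rightarrow> real" where
  "rhodbar Dt ec ed Pd Pc Smin Smax s0 t tau tb =
     (if rhod Dt ec ed Pd Pc Smin Smax s0 t tau tb \<le> 0 then - ed * ec
      else rhod Dt ec ed Pd Pc Smin Smax s0 t tau tb / PceT Dt ec ed Pd Pc Smin Smax s0 (t + tau))"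

definition storage_feasible ::
  "nat \<Rightarrow> real \<Rightarrow> real \<Rightarrow> real \<Rightarrow> real \<Rightarrow> real \<Rightarrow> real \<Rightarrow> real \<Rightarrow> real \<Rightarrow>
   (nat \<Rightarrow> real) \<Rightarrow> (nat \<Rightarrow> real) \<Rightarrow> (nat \<Rightarrow> real) \<Rightarrow> bool" where
  "storage_feasible T Dt ec ed Pd Pc Smin Smax s0 pd pc s \<longleftrightarrow>
     s 0 = s0 \<and>
     (\<forall>t\<in>{1..T}. 0 \<le> pd t \<and> 0 \<le> pc t \<and> 0 \<le> s t \<and>
        pd t \<le> Pd \<and> pc t \<le> Pc \<and> Smin \<le> s t \<and> s t \<le> Smax \<and>
        s t = s (t - 1) + Dt * (ec * pc t - pd t / ed) \<and>
        pd t * pc t = 0)"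

end

theory Submission
  imports Defs
begin


lemma shift_ineq:
  fixes A B x y z :: real
  assumes "0 \<le> z" "z \<le> x" "x \<le> y" "A \<le> B"
  shows "min A y - min A x \<le> min B (y - z) - min B (x - z)"
  using assms by (simp add: min_def split: if_splits)

lemma sum_min_pos:
  fixes A P :: real
  assumes "0 \<le> A" "0 < P"
  shows "(\<Sum>j<m. min P (pos (A - real j * P))) = min A (real m * P)"
proof (induction m)
  case 0 then show ?case using assms by simp
next
  case (Suc m)
  have "min A (real m * P) + min P (pos (A - real m * P)) = min A (real (Suc m) * P)"
    using assms by (auto simp: pos_def min_def max_def algebra_simps)
  then show ?case using Suc by simp
qed

lemma generic:
  fixes x y \<rho> :: "nat \<Rightarrow> real" and \<kappa> A B P :: real and n :: nat
  assumes A0: "0 \<le> A" and AB: "A \<le> B" and P0: "0 < P" and k0: "0 < \<kappa>"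
  and xy: "\<And>j. j \<le> n \<Longrightarrow> 0 \<le> x j \<and> 0 \<le> y j \<and> x j * y j = 0 \<and> x j \<le> P"
  and win0: "\<And>m. m \<le> Suc n \<Longrightarrow> (\<Sum>j\<in>{0..<m}. x j - \<kappa> * y j) \<le> A"
  and win: "\<And>l m. 0 < l \<Longrightarrow> l \<le> m \<Longrightarrow> m \<le> Suc n \<Longrightarrow> (\<Sum>j\<in>{l..<m}. x j - \<kappa> * y j) \<le> B"
  and coef: "\<And>j. j \<le> n \<Longrightarrow> \<rho> j \<noteq> -\<kappa> \<Longrightarrow> y j \<noteq> 0 \<Longrightarrow>
      \<rho> j * y j \<le> min A (real (Suc n) * P) - min A (real j * P) - min B (real (n - j) * P)"
  shows "m \<le> Suc n \<Longrightarrow> (\<Sum>j<m. x j + \<rho> j * y j) \<le> min A (real m * P)"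
proof (induction m rule: less_induct)
  case (less m)
  define S where "S = {j. j < m \<and> \<rho> j \<noteq> -\<kappa> \<and> y j \<noteq> 0}"
  have Sfin: "finite S" by (simp add: S_def)
  have tail: "(\<Sum>j\<in>{l..<m}. x j + \<rho> j * y j) = (\<Sum>j\<in>{l..<m}. x j - \<kappa> * y j)"
    if "\<forall>j\<in>{l..<m}. j \<notin> S" for l
    using that by (intro sum.cong) (auto simp: S_def, metis atLeastLessThan_iff mult_minus_left mult_zero_right)
  have tailP: "(\<Sum>j\<in>{l..<m}. x j - \<kappa> * y j) \<le> real (m - l) * P" for l
  proof -
    have "(\<Sum>j\<in>{l..<m}. x j - \<kappa> * y j) \<le> (\<Sum>j\<in>{l..<m}. P)"
    proof (rule sum_mono)
      fix j assume "j \<in> {l..<m}"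
      then have "j \<le> n" using less.prems by auto
      then have "0 \<le> y j" "x j \<le> P" using xy by auto
      moreover have "0 \<le> \<kappa> * y j" using k0 \<open>0 \<le> y j\<close> by simp
      ultimately show "x j - \<kappa> * y j \<le> P" by linarith
    qed
    then show ?thesis by simp
  qed
  show ?case
  proof (cases "S = {}")
    case True
    have "(\<Sum>j<m. x j + \<rho> j * y j) = (\<Sum>j\<in>{0..<m}. x j - \<kappa> * y j)"
      using tail[of 0] True by (simp add: atLeast0LessThan)
    moreover have "(\<Sum>j\<in>{0..<m}. x j - \<kappa> * y j) \<le> A" using win0 less.prems by simp
    moreover have "(\<Sum>j\<in>{0..<m}. x j - \<kappa> * y j) \<le> real m * P" using tailP[of 0] by simp
    ultimately show ?thesis by simp
  next
    case False
    define m' where "m' = Max S"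
    have m'S: "m' \<in> S" using Max_in Sfin False m'_def by blast
    then have m'm: "m' < m" and r: "\<rho> m' \<noteq> -\<kappa>" and yne: "y m' \<noteq> 0" by (auto simp: S_def)
    have m'n: "m' \<le> n" using m'm less.prems by simp
    have after: "\<forall>j\<in>{Suc m'..<m}. j \<notin> S"
    proof
      fix j assume j: "j \<in> {Suc m'..<m}"
      show "j \<notin> S"
      proof
        assume "j \<in> S"
        then have "j \<le> m'" using Max_ge Sfin m'_def by blast
        then show False using j by simp
      qed
    qed
    have spl: "(\<Sum>j<m. x j + \<rho> j * y j) = (\<Sum>j<m'. x j + \<rho> j * y j) + (x m' + \<rho> m' * y m')
         + (\<Sum>j\<in>{Suc m'..<m}. x j + \<rho> j * y j)"
    proof -
      have "(\<Sum>j\<in>{0..<m}. x j + \<rho> j * y j) = (\<Sum>j\<in>{0..<Suc m'}. x j + \<rho> j * y j)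
         + (\<Sum>j\<in>{Suc m'..<m}. x j + \<rho> j * y j)"
        using m'm sum.atLeastLessThan_concat[of 0 "Suc m'" m "\<lambda>j. x j + \<rho> j * y j"] by simp
      then show ?thesis by (simp add: atLeast0LessThan)
    qed
    have IH: "(\<Sum>j<m'. x j + \<rho> j * y j) \<le> min A (real m' * P)"
      using less.IH[of m'] m'm less.prems by simp
    have x0: "x m' = 0" using xy[OF m'n] yne by simp
    have T2: "x m' + \<rho> m' * y m' \<le> min A (real (Suc n) * P) - min A (real m' * P) - min B (real (n - m') * P)"
      using coef[OF m'n r yne] x0 by simp
    have T3: "(\<Sum>j\<in>{Suc m'..<m}. x j + \<rho> j * y j) \<le> min B (real (m - Suc m') * P)"
      using tail[OF after] tailP[of "Suc m'"] win[of "Suc m'" m] m'm less.prems by simp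
    have sh: "min A (real (Suc n) * P) - min A (real m * P)
        \<le> min B (real (Suc n) * P - real (Suc m') * P) - min B (real m * P - real (Suc m') * P)"
      by (rule shift_ineq) (use m'm less.prems P0 AB in auto)
    have e1: "real (Suc n) * P - real (Suc m') * P = real (n - m') * P"
      using m'n by (simp add: of_nat_diff algebra_simps)
    have e2: "real m * P - real (Suc m') * P = real (m - Suc m') * P"
      using m'm by (simp add: of_nat_diff algebra_simps)
    show ?thesis using spl IH T2 T3 sh e1 e2 by linarith
  qed
qed



lemma Pde_nonneg: "0 < Dt \<Longrightarrow> 0 < ed \<Longrightarrow> 0 < Pd \<Longrightarrow> Smin < Smax \<Longrightarrow> 0 < Pde Dt ed Pd Smin Smax"
  by (simp add: Pde_def)
lemma Pce_nonneg: "0 < Dt \<Longrightarrow> 0 < ec \<Longrightarrow> 0 < Pc \<Longrightarrow> Smin < Smax \<Longrightarrow> 0 < Pce Dt ec Pc Smin Smax"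
  by (simp add: Pce_def)

locale stor =
  fixes T :: nat and Dt ec ed Pd Pc Smin Smax s0 :: real
    and pd pc s :: "nat \<Rightarrow> real"
  assumes Dt: "Dt > 0"
    and ec: "0 < ec" and ed: "0 < ed"
    and Pd: "Pd > 0" and Pc: "Pc > 0" and SS: "Smin < Smax"
    and s0l: "Smin \<le> s0" and s0u: "s0 \<le> Smax"
    and feas: "storage_feasible T Dt ec ed Pd Pc Smin Smax s0 pd pc s"
begin

lemma F: "u \<in> {1..T} \<Longrightarrow> 0 \<le> pd u \<and> 0 \<le> pc u \<and>
        pd u \<le> Pd \<and> pc u \<le> Pc \<and> Smin \<le> s u \<and> s u \<le> Smax \<and>
        s u = s (u - 1) + Dt * (ec * pc u - pd u / ed) \<and> pd u * pc u = 0"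
  using feas unfolding storage_feasible_def by blast

lemma s_0: "s 0 = s0" using feas unfolding storage_feasible_def by blast

lemma sb: "u \<le> T \<Longrightarrow> Smin \<le> s u \<and> s u \<le> Smax"
  using F[of u] s_0 s0l s0u by (cases u) auto

lemma pdb: assumes "u \<in> {1..T}"
  shows "pd u \<le> Pde Dt ed Pd Smin Smax \<and> pd u \<le> ed * (s (u - 1) - Smin) / Dt"
proof (cases "pd u = 0")
  case True
  then show ?thesis using sb[of "u - 1"] assms Pde_nonneg[OF Dt ed Pd SS] Dt ed by auto
next
  case False
  have f: "0 \<le> pd u" "pd u \<le> Pd" "Smin \<le> s u" "s u = s (u - 1) + Dt * (ec * pc u - pd u / ed)"
    "pd u * pc u = 0" using F[OF assms] by auto
  have pc0: "pc u = 0" using f(5) False by simp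
  have "s u = s (u - 1) - Dt * pd u / ed" using f(4) pc0 by simp
  then have "Dt * pd u / ed \<le> s (u - 1) - Smin" using f(3) by linarith
  then have "Dt * pd u \<le> ed * (s (u - 1) - Smin)" using ed by (simp add: pos_divide_le_eq mult.commute)
  then have a: "pd u \<le> ed * (s (u - 1) - Smin) / Dt" using Dt by (simp add: pos_le_divide_eq mult.commute)
  have "ed * (s (u - 1) - Smin) / Dt \<le> ed * (Smax - Smin) / Dt"
    using sb[of "u - 1"] assms ed Dt by (intro divide_right_mono mult_left_mono) auto
  then show ?thesis using a f(2) by (simp add: Pde_def)
qed

lemma pcb: assumes "u \<in> {1..T}"
  shows "pc u \<le> Pce Dt ec Pc Smin Smax \<and> pc u \<le> (Smax - s (u - 1)) / (Dt * ec)"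
proof (cases "pc u = 0")
  case True
  then show ?thesis using sb[of "u - 1"] assms Pce_nonneg[OF Dt ec Pc SS] Dt ec by auto
next
  case False
  have f: "0 \<le> pc u" "pc u \<le> Pc" "s u \<le> Smax" "s u = s (u - 1) + Dt * (ec * pc u - pd u / ed)"
    "pd u * pc u = 0" using F[OF assms] by auto
  have pd0: "pd u = 0" using f(5) False by simp
  have "s u = s (u - 1) + (Dt * ec) * pc u" using f(4) pd0 by simp
  then have "(Dt * ec) * pc u \<le> Smax - s (u - 1)" using f(3) by linarith
  then have a: "pc u \<le> (Smax - s (u - 1)) / (Dt * ec)" using Dt ec by (simp add: pos_le_divide_eq mult.commute)
  have "(Smax - s (u - 1)) / (Dt * ec) \<le> (Smax - Smin) / (Dt * ec)"
    using sb[of "u - 1"] assms ec Dt by (intro divide_right_mono) auto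
  then show ?thesis using a f(2) by (simp add: Pce_def)
qed

lemma slow_b: "u \<le> T \<Longrightarrow> slow Dt ed Pd Smin Smax s0 u \<le> s u"
proof (induction u)
  case 0 then show ?case using s_0 by simp
next
  case (Suc u)
  have u: "Suc u \<in> {1..T}" using Suc by simp
  have f: "0 \<le> pc (Suc u)" "Smin \<le> s (Suc u)" "s (Suc u) = s u + Dt * (ec * pc (Suc u) - pd (Suc u) / ed)"
    using F[OF u] by auto
  have p: "pd (Suc u) \<le> Pde Dt ed Pd Smin Smax" using pdb[OF u] by simp
  have "Dt * pd (Suc u) / ed \<le> Dt * Pde Dt ed Pd Smin Smax / ed"
    using p Dt ed by (intro divide_right_mono mult_left_mono) auto
  moreover have "0 \<le> Dt * ec * pc (Suc u)" using Dt ec f(1) by simp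
  moreover have "s (Suc u) = s u + Dt * ec * pc (Suc u) - Dt * pd (Suc u) / ed"
    using f(3) by (simp add: algebra_simps)
  ultimately show ?case using Suc f(2) by simp
qed

lemma shigh_b: "u \<le> T \<Longrightarrow> s u \<le> shigh Dt ec Pc Smin Smax s0 u"
proof (induction u)
  case 0 then show ?case using s_0 by simp
next
  case (Suc u)
  have u: "Suc u \<in> {1..T}" using Suc by simp
  have f: "0 \<le> pd (Suc u)" "s (Suc u) \<le> Smax" "s (Suc u) = s u + Dt * (ec * pc (Suc u) - pd (Suc u) / ed)"
    using F[OF u] by auto
  have p: "pc (Suc u) \<le> Pce Dt ec Pc Smin Smax" using pcb[OF u] by simp
  have "Dt * ec * pc (Suc u) \<le> Dt * ec * Pce Dt ec Pc Smin Smax"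
    using p Dt ec by (intro mult_left_mono) auto
  moreover have "0 \<le> Dt * pd (Suc u) / ed" using Dt ed f(1) by simp
  moreover have "s (Suc u) = s u + Dt * ec * pc (Suc u) - Dt * pd (Suc u) / ed"
    using f(3) by (simp add: algebra_simps)
  ultimately show ?case using Suc f(2) by simp
qed

lemma slow_ge: "Smin \<le> slow Dt ed Pd Smin Smax s0 u"
  by (cases u) (auto simp: s0l)
lemma shigh_le: "shigh Dt ec Pc Smin Smax s0 u \<le> Smax"
  by (cases u) (auto simp: s0u)

lemma tele: assumes "t \<ge> 1" "l \<le> m"
  shows "(\<Sum>j\<in>{l..<m}. s (t + j) - s (t + j - 1)) = s (t + m - 1) - s (t + l - 1)"
proof -
  have "(\<Sum>j\<in>{l..<m}. s (t + j) - s (t + j - 1)) = (\<Sum>j\<in>{l..<m}. (\<lambda>i. s (t + i - 1)) (Suc j) - (\<lambda>i. s (t + i - 1)) j)"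
    using assms(1) by (intro sum.cong) auto
  also have "\<dots> = s (t + m - 1) - s (t + l - 1)" by (rule sum_Suc_diff'[OF assms(2)])
  finally show ?thesis .
qed

lemma step_c: assumes "u \<in> {1..T}" shows "pc u - 1 / (ed * ec) * pd u = (s u - s (u - 1)) / (Dt * ec)"
proof -
  have "s u - s (u - 1) = Dt * (ec * pc u - pd u / ed)" using F[OF assms] by simp
  then have "(s u - s (u - 1)) / (Dt * ec) = Dt * (ec * pc u - pd u / ed) / (Dt * ec)" by simp
  also have "\<dots> = pc u - 1 / (ed * ec) * pd u" using Dt ec ed by (simp add: field_simps)
  finally show ?thesis by simp
qed

lemma step_d: assumes "u \<in> {1..T}" shows "pd u - ed * ec * pc u = ed * (s (u - 1) - s u) / Dt"
proof -
  have "s (u - 1) - s u = - Dt * (ec * pc u - pd u / ed)" using F[OF assms] by simp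
  then have "ed * (s (u - 1) - s u) / Dt = ed * (- Dt * (ec * pc u - pd u / ed)) / Dt" by simp
  also have "\<dots> = pd u - ed * ec * pc u" using Dt ec ed by (simp add: field_simps)
  finally show ?thesis by simp
qed


lemma hh: "(x::real) * (a - b) / D = - (x / D) * (b - a)"
  by (simp add: algebra_simps diff_divide_distrib)

lemma sum_from:
  fixes f :: "nat \<Rightarrow> real"
  assumes "j \<le> Suc n"
  shows "(\<Sum>i\<in>{j..n}. f i) = (\<Sum>i<Suc n. f i) - (\<Sum>i<j. f i)"
proof -
  have "(\<Sum>i\<in>{0..<j}. f i) + (\<Sum>i\<in>{j..<Suc n}. f i) = (\<Sum>i\<in>{0..<Suc n}. f i)"
    using assms sum.atLeastLessThan_concat[of 0 j "Suc n" f] by simp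
  moreover have "{j..<Suc n} = {j..n}" by auto
  ultimately show ?thesis by (simp add: atLeast0LessThan)
qed

lemma VIc:
  assumes t: "1 \<le> t" and tb: "t + tb \<le> T"
    and posT: "\<forall>t\<in>{1..T}. PceT Dt ec ed Pd Pc Smin Smax s0 t > 0 \<and> PdeT Dt ec ed Pd Pc Smin Smax s0 t > 0"
  shows "(\<Sum>tau\<in>{0..tb}. pc (t + tau) + rhocbar Dt ec ed Pd Pc Smin Smax s0 t tau tb * pd (t + tau))
      \<le> (\<Sum>tau\<in>{0..tb}. cfun Dt ec ed Pd Pc Smin Smax s0 t tau)"
proof -
  define A where "A = (Smax - slow Dt ed Pd Smin Smax s0 (t - 1)) / (Dt * ec)"
  define B where "B = (Smax - Smin) / (Dt * ec)"
  define P where "P = Pce Dt ec Pc Smin Smax"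
  define \<kappa> where "\<kappa> = 1 / (ed * ec)"
  have P0: "0 < P" using Pce_nonneg[OF Dt ec Pc SS] P_def by simp
  have k0: "0 < \<kappa>" using ed ec \<kappa>_def by simp
  have sl: "slow Dt ed Pd Smin Smax s0 (t - 1) \<le> s (t - 1)" using slow_b tb by simp
  have A0: "0 \<le> A"
  proof -
    have "slow Dt ed Pd Smin Smax s0 (t - 1) \<le> Smax" using sl sb[of "t - 1"] tb by force
    then show ?thesis unfolding A_def using Dt ec by simp
  qed
  have AB: "A \<le> B" unfolding A_def B_def using slow_ge[of "t - 1"] Dt ec
    by (intro divide_right_mono) auto
  have cf: "\<And>j. cfun Dt ec ed Pd Pc Smin Smax s0 t j = min P (pos (A - real j * P))"
    by (simp add: cfun_def A_def P_def)
  have cb: "\<And>j. cbar Dt ec Pc Smin Smax j = min P (pos (B - real j * P))"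
    by (simp add: cbar_def B_def P_def)
  have sumC: "\<And>m. (\<Sum>j<m. cfun Dt ec ed Pd Pc Smin Smax s0 t j) = min A (real m * P)"
    using sum_min_pos[OF A0 P0] cf by simp
  have sumCb: "\<And>m. (\<Sum>j<m. cbar Dt ec Pc Smin Smax j) = min B (real m * P)"
    using sum_min_pos[OF _ P0] cb AB A0 by simp
  have wsum: "(\<Sum>j\<in>{l..<m}. pc (t + j) - \<kappa> * pd (t + j)) = (s (t + m - 1) - s (t + l - 1)) / (Dt * ec)"
    if "l \<le> m" "m \<le> Suc tb" for l m
  proof -
    have "(\<Sum>j\<in>{l..<m}. pc (t + j) - \<kappa> * pd (t + j)) = (\<Sum>j\<in>{l..<m}. (s (t + j) - s (t + j - 1)) / (Dt * ec))"
      using that tb t step_c unfolding \<kappa>_def by (intro sum.cong) auto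
    also have "\<dots> = (\<Sum>j\<in>{l..<m}. s (t + j) - s (t + j - 1)) / (Dt * ec)"
      by (simp add: sum_divide_distrib)
    also have "\<dots> = (s (t + m - 1) - s (t + l - 1)) / (Dt * ec)" using tele[OF t that(1)] by simp
    finally show ?thesis .
  qed
  have main: "(\<Sum>j<Suc tb. pc (t + j) + rhocbar Dt ec ed Pd Pc Smin Smax s0 t j tb * pd (t + j)) \<le> min A (real (Suc tb) * P)"
  proof (rule generic[where \<kappa>=\<kappa> and B=B and n=tb])
    show "0 \<le> A" "A \<le> B" "0 < P" "0 < \<kappa>" by (fact A0 AB P0 k0)+
    show "0 \<le> pc (t + j) \<and> 0 \<le> pd (t + j) \<and> pc (t + j) * pd (t + j) = 0 \<and> pc (t + j) \<le> P"
      if "j \<le> tb" for j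
      using F[of "t + j"] pcb[of "t + j"] that t tb P_def by (auto simp: mult.commute)
    show "(\<Sum>j\<in>{0..<m}. pc (t + j) - \<kappa> * pd (t + j)) \<le> A" if "m \<le> Suc tb" for m
    proof -
      have "s (t + m - 1) \<le> Smax" using sb[of "t + m - 1"] that tb by simp
      then have "(s (t + m - 1) - s (t + 0 - 1)) / (Dt * ec) \<le> A"
        unfolding A_def using sl Dt ec by (intro divide_right_mono) auto
      then show ?thesis using wsum[of 0 m] that by simp
    qed
    show "(\<Sum>j\<in>{l..<m}. pc (t + j) - \<kappa> * pd (t + j)) \<le> B" if "0 < l" "l \<le> m" "m \<le> Suc tb" for l m
    proof -
      have "s (t + m - 1) \<le> Smax" "Smin \<le> s (t + l - 1)"
        using sb[of "t + m - 1"] sb[of "t + l - 1"] that tb by auto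
      then have "(s (t + m - 1) - s (t + l - 1)) / (Dt * ec) \<le> B"
        unfolding B_def using Dt ec by (intro divide_right_mono) auto
      then show ?thesis using wsum[of l m] that by simp
    qed
    show "rhocbar Dt ec ed Pd Pc Smin Smax s0 t j tb * pd (t + j)
        \<le> min A (real (Suc tb) * P) - min A (real j * P) - min B (real (tb - j) * P)"
      if j: "j \<le> tb" and r: "rhocbar Dt ec ed Pd Pc Smin Smax s0 t j tb \<noteq> - \<kappa>"
        and "pd (t + j) \<noteq> 0" for j
    proof -
      let ?r = "rhoc Dt ec ed Pd Pc Smin Smax s0 t j tb"
      let ?Q = "PdeT Dt ec ed Pd Pc Smin Smax s0 (t + j)"
      have u: "t + j \<in> {1..T}" using t tb j by simp
      have Q0: "0 < ?Q" using posT u by blast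
      have rpos: "0 < ?r" using r unfolding rhocbar_def \<kappa>_def by (auto split: if_splits)
      have rb: "rhocbar Dt ec ed Pd Pc Smin Smax s0 t j tb = ?r / ?Q"
        using rpos unfolding rhocbar_def by simp
      have neg: "- ?Q / (ed * ec) \<le> 0" using Q0 ed ec by simp
      have req: "?r = (\<Sum>i\<in>{j..tb}. cfun Dt ec ed Pd Pc Smin Smax s0 t i) - (\<Sum>i<tb - j. cbar Dt ec Pc Smin Smax i)"
        using rpos neg unfolding rhoc_def by (auto simp: max_def split: if_splits)
      have req2: "?r = min A (real (Suc tb) * P) - min A (real j * P) - min B (real (tb - j) * P)"
      proof -
        have "(\<Sum>i\<in>{j..tb}. cfun Dt ec ed Pd Pc Smin Smax s0 t i) = min A (real (Suc tb) * P) - min A (real j * P)"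
          using sum_from[of j tb "cfun Dt ec ed Pd Pc Smin Smax s0 t"] j unfolding sumC by linarith
        then show ?thesis using req unfolding sumCb by linarith
      qed
      have pdQ: "pd (t + j) \<le> ?Q"
      proof -
        have a: "pd (t + j) \<le> Pde Dt ed Pd Smin Smax" "pd (t + j) \<le> ed * (s (t + j - 1) - Smin) / Dt"
          using pdb[OF u] by auto
        have "ed * (s (t + j - 1) - Smin) / Dt \<le> (shigh Dt ec Pc Smin Smax s0 (t + j - 1) - Smin) * ed / Dt"
          using shigh_b[of "t + j - 1"] u ed Dt by (auto simp: field_simps intro!: divide_right_mono)
        then show ?thesis using a unfolding PdeT_def dfun_def pos_def by simp
      qed
      have pd0: "0 \<le> pd (t + j)" using F[OF u] by simp
      have "?r / ?Q * pd (t + j) \<le> ?r"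
      proof -
        have "?r * pd (t + j) \<le> ?r * ?Q" using pdQ rpos by (intro mult_left_mono) auto
        then show ?thesis using Q0 by (simp add: divide_le_eq mult.commute)
      qed
      then show ?thesis using rb req2 by simp
    qed
    show "Suc tb \<le> Suc tb" by simp
  qed
  have "(\<Sum>tau\<in>{0..tb}. cfun Dt ec ed Pd Pc Smin Smax s0 t tau) = min A (real (Suc tb) * P)"
    using sumC[of "Suc tb"] by (simp add: atLeast0AtMost lessThan_Suc_atMost)
  moreover have "(\<Sum>tau\<in>{0..tb}. pc (t + tau) + rhocbar Dt ec ed Pd Pc Smin Smax s0 t tau tb * pd (t + tau))
     = (\<Sum>j<Suc tb. pc (t + j) + rhocbar Dt ec ed Pd Pc Smin Smax s0 t j tb * pd (t + j))"
    by (simp add: atLeast0AtMost lessThan_Suc_atMost)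
  ultimately show ?thesis using main by simp
qed

lemma VId:
  assumes t: "1 \<le> t" and tb: "t + tb \<le> T"
    and posT: "\<forall>t\<in>{1..T}. PceT Dt ec ed Pd Pc Smin Smax s0 t > 0 \<and> PdeT Dt ec ed Pd Pc Smin Smax s0 t > 0"
  shows "(\<Sum>tau\<in>{0..tb}. pd (t + tau) + rhodbar Dt ec ed Pd Pc Smin Smax s0 t tau tb * pc (t + tau))
      \<le> (\<Sum>tau\<in>{0..tb}. dfun Dt ec ed Pd Pc Smin Smax s0 t tau)"
proof -
  define A where "A = (shigh Dt ec Pc Smin Smax s0 (t - 1) - Smin) * ed / Dt"
  define B where "B = (Smax - Smin) * ed / Dt"
  define P where "P = Pde Dt ed Pd Smin Smax"
  define \<kappa> where "\<kappa> = ed * ec"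
  have P0: "0 < P" using Pde_nonneg[OF Dt ed Pd SS] P_def by simp
  have k0: "0 < \<kappa>" using ed ec \<kappa>_def by simp
  have sl: "s (t - 1) \<le> shigh Dt ec Pc Smin Smax s0 (t - 1)" using shigh_b tb by simp
  have A0: "0 \<le> A"
  proof -
    have "Smin \<le> shigh Dt ec Pc Smin Smax s0 (t - 1)" using sl sb[of "t - 1"] tb by force
    then show ?thesis unfolding A_def using Dt ed by simp
  qed
  have AB: "A \<le> B" unfolding A_def B_def using shigh_le[of "t - 1"] Dt ed
    by (intro divide_right_mono mult_right_mono) auto
  have cf: "\<And>j. dfun Dt ec ed Pd Pc Smin Smax s0 t j = min P (pos (A - real j * P))"
    by (simp add: dfun_def A_def P_def)
  have cb: "\<And>j. dbar Dt ed Pd Smin Smax j = min P (pos (B - real j * P))"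
    by (simp add: dbar_def B_def P_def)
  have sumC: "\<And>m. (\<Sum>j<m. dfun Dt ec ed Pd Pc Smin Smax s0 t j) = min A (real m * P)"
    using sum_min_pos[OF A0 P0] cf by simp
  have sumCb: "\<And>m. (\<Sum>j<m. dbar Dt ed Pd Smin Smax j) = min B (real m * P)"
    using sum_min_pos[OF _ P0] cb AB A0 by simp
  have wsum: "(\<Sum>j\<in>{l..<m}. pd (t + j) - \<kappa> * pc (t + j)) = - (ed / Dt) * (s (t + m - 1) - s (t + l - 1))"
    if "l \<le> m" "m \<le> Suc tb" for l m
  proof -
    have "(\<Sum>j\<in>{l..<m}. pd (t + j) - \<kappa> * pc (t + j)) = (\<Sum>j\<in>{l..<m}. - (ed / Dt) * (s (t + j) - s (t + j - 1)))"
      unfolding \<kappa>_def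
    proof (rule sum.cong)
      fix j assume "j \<in> {l..<m}"
      then have u: "t + j \<in> {1..T}" using that tb t by auto
      show "pd (t + j) - ed * ec * pc (t + j) = - (ed / Dt) * (s (t + j) - s (t + j - 1))"
        by (rule trans[OF step_d[OF u] hh])
    qed simp
    also have "\<dots> = - (ed / Dt) * (\<Sum>j\<in>{l..<m}. s (t + j) - s (t + j - 1))"
      by (simp add: sum_distrib_left)
    also have "\<dots> = - (ed / Dt) * (s (t + m - 1) - s (t + l - 1))" using tele[OF t that(1)] by simp
    finally show ?thesis .
  qed
  have main: "(\<Sum>j<Suc tb. pd (t + j) + rhodbar Dt ec ed Pd Pc Smin Smax s0 t j tb * pc (t + j)) \<le> min A (real (Suc tb) * P)"
  proof (rule generic[where \<kappa>=\<kappa> and B=B and n=tb])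
    show "0 \<le> A" "A \<le> B" "0 < P" "0 < \<kappa>" by (fact A0 AB P0 k0)+
    show "0 \<le> pd (t + j) \<and> 0 \<le> pc (t + j) \<and> pd (t + j) * pc (t + j) = 0 \<and> pd (t + j) \<le> P"
      if "j \<le> tb" for j
      using F[of "t + j"] pdb[of "t + j"] that t tb P_def by auto
    show "(\<Sum>j\<in>{0..<m}. pd (t + j) - \<kappa> * pc (t + j)) \<le> A" if "m \<le> Suc tb" for m
    proof -
      have "Smin \<le> s (t + m - 1)" using sb[of "t + m - 1"] that tb by simp
      then have "(s (t + 0 - 1) - s (t + m - 1)) * ed / Dt \<le> A"
        unfolding A_def using sl Dt ed by (intro divide_right_mono mult_right_mono) auto
      then have "- (ed / Dt) * (s (t + m - 1) - s (t + 0 - 1)) \<le> A"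
        using hh[of ed "s (t + 0 - 1)" "s (t + m - 1)" Dt] by (simp add: mult.commute)
      then show ?thesis using wsum[of 0 m] that by simp
    qed
    show "(\<Sum>j\<in>{l..<m}. pd (t + j) - \<kappa> * pc (t + j)) \<le> B" if "0 < l" "l \<le> m" "m \<le> Suc tb" for l m
    proof -
      have "Smin \<le> s (t + m - 1)" "s (t + l - 1) \<le> Smax"
        using sb[of "t + m - 1"] sb[of "t + l - 1"] that tb by auto
      then have "(s (t + l - 1) - s (t + m - 1)) * ed / Dt \<le> B"
        unfolding B_def using Dt ed by (intro divide_right_mono mult_right_mono) auto
      then have "- (ed / Dt) * (s (t + m - 1) - s (t + l - 1)) \<le> B"
        using hh[of ed "s (t + l - 1)" "s (t + m - 1)" Dt] by (simp add: mult.commute)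
      then show ?thesis using wsum[of l m] that by simp
    qed
    show "rhodbar Dt ec ed Pd Pc Smin Smax s0 t j tb * pc (t + j)
        \<le> min A (real (Suc tb) * P) - min A (real j * P) - min B (real (tb - j) * P)"
      if j: "j \<le> tb" and r: "rhodbar Dt ec ed Pd Pc Smin Smax s0 t j tb \<noteq> - \<kappa>"
        and "pc (t + j) \<noteq> 0" for j
    proof -
      let ?r = "rhod Dt ec ed Pd Pc Smin Smax s0 t j tb"
      let ?Q = "PceT Dt ec ed Pd Pc Smin Smax s0 (t + j)"
      have u: "t + j \<in> {1..T}" using t tb j by simp
      have Q0: "0 < ?Q" using posT u by blast
      have rpos: "0 < ?r" using r unfolding rhodbar_def \<kappa>_def by (auto split: if_splits)
      have rb: "rhodbar Dt ec ed Pd Pc Smin Smax s0 t j tb = ?r / ?Q"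
        using rpos unfolding rhodbar_def by simp
      have neg: "- ed * ec * ?Q \<le> 0" using Q0 ed ec by simp
      have req: "?r = (\<Sum>i\<in>{j..tb}. dfun Dt ec ed Pd Pc Smin Smax s0 t i) - (\<Sum>i<tb - j. dbar Dt ed Pd Smin Smax i)"
        using rpos neg unfolding rhod_def by (auto simp: max_def split: if_splits)
      have req2: "?r = min A (real (Suc tb) * P) - min A (real j * P) - min B (real (tb - j) * P)"
      proof -
        have "(\<Sum>i\<in>{j..tb}. dfun Dt ec ed Pd Pc Smin Smax s0 t i) = min A (real (Suc tb) * P) - min A (real j * P)"
          using sum_from[of j tb "dfun Dt ec ed Pd Pc Smin Smax s0 t"] j unfolding sumC by linarith
        then show ?thesis using req unfolding sumCb by linarith
      qed
      have pdQ: "pc (t + j) \<le> ?Q"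
      proof -
        have a: "pc (t + j) \<le> Pce Dt ec Pc Smin Smax" "pc (t + j) \<le> (Smax - s (t + j - 1)) / (Dt * ec)"
          using pcb[OF u] by auto
        have "(Smax - s (t + j - 1)) / (Dt * ec) \<le> (Smax - slow Dt ed Pd Smin Smax s0 (t + j - 1)) / (Dt * ec)"
          using slow_b[of "t + j - 1"] u ec Dt by (auto intro!: divide_right_mono)
        then show ?thesis using a unfolding PceT_def cfun_def pos_def by simp
      qed
      have pd0: "0 \<le> pc (t + j)" using F[OF u] by simp
      have "?r / ?Q * pc (t + j) \<le> ?r"
      proof -
        have "?r * pc (t + j) \<le> ?r * ?Q" using pdQ rpos by (intro mult_left_mono) auto
        then show ?thesis using Q0 by (simp add: divide_le_eq mult.commute)
      qed
      then show ?thesis using rb req2 by simp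
    qed
    show "Suc tb \<le> Suc tb" by simp
  qed
  have "(\<Sum>tau\<in>{0..tb}. dfun Dt ec ed Pd Pc Smin Smax s0 t tau) = min A (real (Suc tb) * P)"
    using sumC[of "Suc tb"] by (simp add: atLeast0AtMost lessThan_Suc_atMost)
  moreover have "(\<Sum>tau\<in>{0..tb}. pd (t + tau) + rhodbar Dt ec ed Pd Pc Smin Smax s0 t tau tb * pc (t + tau))
     = (\<Sum>j<Suc tb. pd (t + j) + rhodbar Dt ec ed Pd Pc Smin Smax s0 t j tb * pc (t + j))"
    by (simp add: atLeast0AtMost lessThan_Suc_atMost)
  ultimately show ?thesis using main by simp
qed


end

theorem theorem1:
  fixes T :: nat and Dt ec ed Pd Pc Smin Smax s0 :: real
    and pd pc s :: "nat \<Rightarrow> real"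
  assumes "T \<ge> 1" and "Dt > 0"
    and "0 < ec" and "ec \<le> 1" and "0 < ed" and "ed \<le> 1"
    and "Pd > 0" and "Pc > 0" and "Smin < Smax"
    and "Smin \<le> s0" and "s0 \<le> Smax"
    and "\<forall>t\<in>{1..T}. PceT Dt ec ed Pd Pc Smin Smax s0 t > 0 \<and> PdeT Dt ec ed Pd Pc Smin Smax s0 t > 0"
    and "storage_feasible T Dt ec ed Pd Pc Smin Smax s0 pd pc s"
  shows "\<forall>t\<in>{1..T}. \<forall>tb\<in>{0..T - t}.
    (\<Sum>tau\<in>{0..tb}. pc (t + tau) + rhocbar Dt ec ed Pd Pc Smin Smax s0 t tau tb * pd (t + tau))
      \<le> (\<Sum>tau\<in>{0..tb}. cfun Dt ec ed Pd Pc Smin Smax s0 t tau)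
  \<and> (\<Sum>tau\<in>{0..tb}. pd (t + tau) + rhodbar Dt ec ed Pd Pc Smin Smax s0 t tau tb * pc (t + tau))
      \<le> (\<Sum>tau\<in>{0..tb}. dfun Dt ec ed Pd Pc Smin Smax s0 t tau)"
  proof -
  interpret stor T Dt ec ed Pd Pc Smin Smax s0 pd pc s
    using assms(2,3,5,7,8,9,10,11,13) by unfold_locales
  show ?thesis
  proof (intro ballI conjI)
    fix t tb assume t: "t \<in> {1..T}" and tb: "tb \<in> {0..T - t}"
    then have a: "1 \<le> t" "t + tb \<le> T" by auto
    show "(\<Sum>tau\<in>{0..tb}. pc (t + tau) + rhocbar Dt ec ed Pd Pc Smin Smax s0 t tau tb * pd (t + tau))
      \<le> (\<Sum>tau\<in>{0..tb}. cfun Dt ec ed Pd Pc Smin Smax s0 t tau)"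
      by (rule VIc[OF a assms(12)])
    show "(\<Sum>tau\<in>{0..tb}. pd (t + tau) + rhodbar Dt ec ed Pd Pc Smin Smax s0 t tau tb * pc (t + tau))
      \<le> (\<Sum>tau\<in>{0..tb}. dfun Dt ec ed Pd Pc Smin Smax s0 t tau)"
      by (rule VId[OF a assms(12)])
  qed
qed

end
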